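(* Let $D$ be a pipe dream and $i\ge1$ a row index with $\mathcal J_i(D)\neq\emptyset$, and let $j_{\min}=\min\mathcal J_i(D)$. Then $\delta(D)=\delta\big(D\setminus\{(i,j_{\min})\}\big)\star s_i$.
   Context: Permutations: $S_\infty=\bigcup_n S_n$ is generated by the simple transpositions $s_a=(a\ a{+}1)$, $a\ge 1$; $l(w)$ is the Coxeter length of $w$. A pipe dream is a finite subset $D\subset\mathbb{Z}_{>0}\times\mathbb{Z}_{>0}$; its elements $(r,c)$ are called crosses (in row $r$, column $c$). The reading word of $D$ is obtained by listing the crosses row by row from top to bottom, within each row from right to left (decreasing $c$), and recording for each cross $(r,c)$ its antidiagonal index $r+c-1$; this gives a word $(a_1,\dots,a_k)$. For $u\in S_\infty$ put $u\star s_a=us_a$ if $l(us_a)=l(u)+1$ and $u\star s_a=u$ otherwise. The Demazure product of $D$ is $\delta(D)=(\cdots((e\star s_{a_1})\star s_{a_2})\cdots)\star s_{a_k}$. For a pipe dream $D$ and row index $i$: $\mathrm{start}_i(D)=\min\{c\ge1:(i,c)\notin D\}$ and $\mathcal J_i(D)=\{c<\mathrm{start}_i(D):(i+1,c)\notin D\}$. *)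

theory Defs
  imports Main "HOL-Library.Product_Lexorder"
begin

text \<open>Permutations of S_infinity are represented as functions nat => nat
  (bijections of the positive integers with finite support; 0 is fixed).
  Products are composition: (u w)(x) = u (w x).\<close>

definition simple_transp :: "nat \<Rightarrow> nat \<Rightarrow> nat" where
  "simple_transp a = (\<lambda>x. if x = a then a + 1 else if x = a + 1 then a else x)"

definition coxeter_length :: "(nat \<Rightarrow> nat) \<Rightarrow> nat" where
  "coxeter_length w = card {(x, y). 0 < x \<and> x < y \<and> w y < w x}"

definition demazure_step :: "(nat \<Rightarrow> nat) \<Rightarrow> nat \<Rightarrow> (nat \<Rightarrow> nat)" where
  "demazure_step u a =
     (if coxeter_length (u \<circ> simple_transp a) = coxeter_length u + 1
      then u \<circ> simple_transp a else u)"

definition reading_list :: "(nat \<times> nat) set \<Rightarrow> (nat \<times> nat) list" where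
  "reading_list D = sort_key (\<lambda>(r, c). (r, - int c)) (sorted_list_of_set D)"

definition reading_word :: "(nat \<times> nat) set \<Rightarrow> nat list" where
  "reading_word D = map (\<lambda>(r, c). r + c - 1) (reading_list D)"

definition demazure_prod :: "(nat \<times> nat) set \<Rightarrow> (nat \<Rightarrow> nat)" where
  "demazure_prod D = foldl demazure_step id (reading_word D)"

definition pd_start :: "(nat \<times> nat) set \<Rightarrow> nat \<Rightarrow> nat" where
  "pd_start D i = (LEAST c. 1 \<le> c \<and> (i, c) \<notin> D)"

definition pd_J :: "(nat \<times> nat) set \<Rightarrow> nat \<Rightarrow> nat set" where
  "pd_J D i = {c. 1 \<le> c \<and> c < pd_start D i \<and> (i + 1, c) \<notin> D}"

end

theory Submission
  imports Defs
begin


definition st :: "(nat \<Rightarrow> nat) \<Rightarrow> nat \<Rightarrow> nat \<Rightarrow> nat" where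
  "st u a = (if u a < u (Suc a) then u \<circ> simple_transp a else u)"

lemma stp_invol[simp]: "simple_transp a (simple_transp a x) = x"
  by (simp add: simple_transp_def)

lemma inj_stp: "inj (simple_transp a)"
  by (metis injI stp_invol)

lemma inj_st: "inj u \<Longrightarrow> inj (st u a)"
  by (simp add: st_def inj_compose inj_stp)

lemma inj_foldl_st: "inj u \<Longrightarrow> inj (foldl st u w)"
  by (induction w arbitrary: u) (auto simp: inj_st)

definition finperm :: "(nat \<Rightarrow> nat) \<Rightarrow> bool" where
  "finperm u = (inj u \<and> (\<exists>N. \<forall>x\<ge>N. u x = x))"

lemma finperm_below:
  fixes u :: "nat \<Rightarrow> nat"
  assumes "inj u" "\<forall>x\<ge>N. u x = x" "x < N" shows "u x < N"
proof (rule ccontr)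
  assume "\<not> u x < N"
  then have "N \<le> u x" by simp
  then have "u (u x) = u x" using assms(2) by blast
  then have "u x = x" using assms(1) by (meson injD)
  then show False using \<open>\<not> u x < N\<close> \<open>x < N\<close> by simp
qed

definition Inv :: "(nat \<Rightarrow> nat) \<Rightarrow> (nat \<times> nat) set" where
  "Inv w = {(x, y). 0 < x \<and> x < y \<and> w y < w x}"

lemma finite_Inv:
  assumes "finperm u" shows "finite (Inv u)"
proof -
  obtain N where N: "\<forall>x\<ge>N. u x = x" and i: "inj u" using assms finperm_def by auto
  have "Inv u \<subseteq> {..<N} \<times> {..<N}"
  proof
    fix p assume "p \<in> Inv u"
    then obtain x y where p: "p = (x,y)" "0 < x" "x < y" "u y < u x" by (auto simp: Inv_def)
    have "y < N"
    proof (rule ccontr)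
      assume "\<not> y < N"
      then have "u y = y" using N by auto
      show False
      proof (cases "x < N")
        case True then show False using finperm_below[OF i N True] \<open>u y = y\<close> p \<open>\<not> y < N\<close> by auto
      next
        case False then show False using N p \<open>u y = y\<close> by auto
      qed
    qed
    then show "p \<in> {..<N} \<times> {..<N}" using p by auto
  qed
  then show ?thesis by (rule finite_subset) auto
qed

lemma stp_order:
  assumes "0 < x" "x < y" "(x, y) \<noteq> (a, Suc a)"
  shows "simple_transp a x < simple_transp a y"
  using assms by (auto simp: simple_transp_def)

lemma finperm_comp:
  assumes "finperm u" shows "finperm (u \<circ> simple_transp a)"
proof -
  obtain N where N: "\<forall>x\<ge>N. u x = x" and i: "inj u" using assms finperm_def by auto
  have "\<forall>x\<ge>max N (a+2). (u \<circ> simple_transp a) x = x" using N by (auto simp: simple_transp_def)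
  then show ?thesis using i inj_stp unfolding finperm_def by (meson inj_compose)
qed

lemma card_Inv_comp:
  assumes "finperm u" "1 \<le> a"
  shows "coxeter_length (u \<circ> simple_transp a) = coxeter_length u + 1 \<longleftrightarrow> u a < u (Suc a)"
proof -
  let ?s = "simple_transp a"
  let ?g = "\<lambda>(x,y). (?s x, ?s y)"
  let ?p = "(a, Suc a)"
  have fu: "finite (Inv u)" using finite_Inv assms by auto
  have fv: "finite (Inv (u \<circ> ?s))" using finite_Inv finperm_comp assms by auto
  have sa: "?s a = Suc a" "?s (Suc a) = a" by (auto simp: simple_transp_def)
  have injg: "inj ?g"
  proof (rule injI)
    fix p q assume h: "?g p = ?g q"
    obtain x y x' y' where pq: "p = (x, y)" "q = (x', y')" by fastforce
    have "?s x = ?s x'" "?s y = ?s y'" using h pq by auto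
    then have "x = x'" "y = y'" using injD[OF inj_stp] by blast+
    then show "p = q" using pq by simp
  qed
  have nep: "(?s x, ?s y) \<noteq> ?p" if "x < y" for x y
  proof
    assume h: "(?s x, ?s y) = ?p"
    then have "?s (?s x) = ?s a" "?s (?s y) = ?s (Suc a)" by auto
    then have "x = Suc a" "y = a" using sa by simp_all
    then show False using that by simp
  qed
  have pos: "0 < x \<Longrightarrow> 0 < ?s x" for x using assms(2) by (auto simp: simple_transp_def)
  have eq: "Inv (u \<circ> ?s) - {?p} = ?g ` (Inv u - {?p})"
  proof
    show "Inv (u \<circ> ?s) - {?p} \<subseteq> ?g ` (Inv u - {?p})"
    proof
      fix q assume q: "q \<in> Inv (u \<circ> ?s) - {?p}"
      then obtain x y where xy: "q = (x,y)" "0 < x" "x < y" "u (?s y) < u (?s x)" "(x,y) \<noteq> ?p"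
        by (auto simp: Inv_def)
      have lt: "?s x < ?s y" using stp_order[OF xy(2) xy(3) xy(5)] .
      have "(?s x, ?s y) \<noteq> ?p" using xy(3) nep by blast
      moreover have "(?s x, ?s y) \<in> Inv u" unfolding Inv_def using pos[OF xy(2)] lt xy(4) by simp
      ultimately have "(?s x, ?s y) \<in> Inv u - {?p}" by blast
      moreover have "q = ?g (?s x, ?s y)" using xy by simp
      ultimately show "q \<in> ?g ` (Inv u - {?p})" by blast
    qed
  next
    show "?g ` (Inv u - {?p}) \<subseteq> Inv (u \<circ> ?s) - {?p}"
    proof
      fix q assume "q \<in> ?g ` (Inv u - {?p})"
      then obtain x y where xy: "q = (?s x, ?s y)" "0 < x" "x < y" "u y < u x" "(x,y) \<noteq> ?p"
        by (auto simp: Inv_def)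
      have lt: "?s x < ?s y" using stp_order[OF xy(2) xy(3) xy(5)] .
      have "(?s x, ?s y) \<noteq> ?p" using xy(3) nep by blast
      moreover have "(?s x, ?s y) \<in> Inv (u \<circ> ?s)" unfolding Inv_def using pos[OF xy(2)] lt xy(4) by simp
      ultimately show "q \<in> Inv (u \<circ> ?s) - {?p}" using xy(1) by simp
    qed
  qed
  have c: "card (Inv (u \<circ> ?s) - {?p}) = card (Inv u - {?p})"
    unfolding eq by (rule card_image) (rule inj_on_subset[OF injg], simp)
  have cl: "coxeter_length w = card (Inv w)" for w unfolding coxeter_length_def Inv_def by simp
  have iu: "inj u" using assms finperm_def by auto
  have ne: "u a \<noteq> u (Suc a)" using iu by (metis injD n_not_Suc_n)
  show ?thesis
  proof (cases "u a < u (Suc a)")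
    case True
    have m1: "?p \<in> Inv (u \<circ> ?s)" unfolding Inv_def using assms(2) sa True by simp
    have m2: "Inv u - {?p} = Inv u" unfolding Inv_def using True by auto
    have "card (Inv (u \<circ> ?s)) = Suc (card (Inv (u \<circ> ?s) - {?p}))" by (rule card.remove[OF fv m1])
    then have "card (Inv (u \<circ> ?s)) = card (Inv u) + 1" using c m2 by simp
    then show ?thesis using True cl by simp
  next
    case False
    then have F: "u (Suc a) < u a" using ne by simp
    have m1: "?p \<in> Inv u" unfolding Inv_def using assms(2) F by simp
    have m2: "Inv (u \<circ> ?s) - {?p} = Inv (u \<circ> ?s)" unfolding Inv_def using F sa by auto
    have "card (Inv u) = Suc (card (Inv u - {?p}))" by (rule card.remove[OF fu m1])
    then have "card (Inv u) = card (Inv (u \<circ> ?s)) + 1" using c m2 by simp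
    then show ?thesis using False cl by simp
  qed
qed

lemma dstep_st: "finperm u \<Longrightarrow> 1 \<le> a \<Longrightarrow> demazure_step u a = st u a"
  using card_Inv_comp by (simp add: demazure_step_def st_def)

lemma finperm_st: "finperm u \<Longrightarrow> finperm (st u a)"
  by (simp add: st_def finperm_comp)

lemma foldl_dstep:
  "finperm u \<Longrightarrow> \<forall>a\<in>set w. 1 \<le> a \<Longrightarrow> foldl demazure_step u w = foldl st u w"
  by (induction w arbitrary: u) (auto simp: dstep_st finperm_st)

lemma finperm_foldl: "finperm u \<Longrightarrow> finperm (foldl st u w)"
  by (induction w arbitrary: u) (auto simp: finperm_st)

lemma finperm_id: "finperm id" by (simp add: finperm_def)



definition heq :: "nat list \<Rightarrow> nat list \<Rightarrow> bool" where
  "heq w1 w2 = (\<forall>u. inj u \<longrightarrow> foldl st u w1 = foldl st u w2)"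

lemma heq_refl: "heq w w" by (simp add: heq_def)
lemma heq_sym: "heq w1 w2 \<Longrightarrow> heq w2 w1" by (simp add: heq_def)
lemma heq_trans: "heq w1 w2 \<Longrightarrow> heq w2 w3 \<Longrightarrow> heq w1 w3" by (simp add: heq_def)
lemma heq_app: "heq w1 w2 \<Longrightarrow> heq w3 w4 \<Longrightarrow> heq (w1 @ w3) (w2 @ w4)"
  unfolding heq_def
proof (intro allI impI)
  fix u :: "nat \<Rightarrow> nat"
  assume h1: "\<forall>u. inj u \<longrightarrow> foldl st u w1 = foldl st u w2"
    and h2: "\<forall>u. inj u \<longrightarrow> foldl st u w3 = foldl st u w4" and iu: "inj u"
  have "foldl st u (w1 @ w3) = foldl st (foldl st u w1) w3" by simp
  also have "\<dots> = foldl st (foldl st u w2) w3" using h1 iu by simp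
  also have "\<dots> = foldl st (foldl st u w2) w4" using h2 inj_foldl_st[OF iu] by simp
  finally show "foldl st u (w1 @ w3) = foldl st u (w2 @ w4)" by simp
qed

lemma st_comm:
  assumes "a + 2 \<le> b \<or> b + 2 \<le> a"
  shows "st (st u a) b = st (st u b) a"
proof -
  have pw: "simple_transp a (simple_transp b x) = simple_transp b (simple_transp a x)" for x
  proof -
    have ne: "a \<noteq> b" "a \<noteq> Suc b" "Suc a \<noteq> b" "b \<noteq> a" "Suc b \<noteq> a" "b \<noteq> Suc a"
      "Suc a \<noteq> Suc b" "Suc b \<noteq> Suc a"
      using assms by auto
    consider "x = a" | "x = Suc a" | "x = b" | "x = Suc b" | "x \<noteq> a \<and> x \<noteq> Suc a \<and> x \<noteq> b \<and> x \<noteq> Suc b"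
      by blast
    then show ?thesis
    proof cases
      case 1 then show ?thesis using ne by (simp add: simple_transp_def)
    next
      case 2 then show ?thesis using ne by (simp add: simple_transp_def)
    next
      case 3 then show ?thesis using ne by (simp add: simple_transp_def)
    next
      case 4 then show ?thesis using ne by (simp add: simple_transp_def)
    next
      case 5 then show ?thesis by (simp add: simple_transp_def)
    qed
  qed
  have c: "simple_transp a \<circ> simple_transp b = simple_transp b \<circ> simple_transp a"
    using pw by (simp add: fun_eq_iff)
  have fa: "simple_transp a b = b" "simple_transp a (Suc b) = Suc b"
    "simple_transp b a = a" "simple_transp b (Suc a) = Suc a"
    using assms by (auto simp: simple_transp_def)
  have c': "u \<circ> simple_transp a \<circ> simple_transp b = u \<circ> simple_transp b \<circ> simple_transp a"
    using c by (metis comp_assoc)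
  show ?thesis
    by (cases "u a < u (Suc a)"; cases "u b < u (Suc b)") (simp_all add: st_def fa c')
qed

lemma heq_comm1:
  assumes "\<forall>y\<in>set ys. a + 2 \<le> y \<or> y + 2 \<le> a"
  shows "heq (a # ys) (ys @ [a])"
  using assms unfolding heq_def
proof (induction ys)
  case Nil then show ?case by simp
next
  case (Cons y ys)
  show ?case
  proof (intro allI impI)
    fix u :: "nat \<Rightarrow> nat" assume iu: "inj u"
    have "foldl st u (a # y # ys) = foldl st (st (st u y) a) ys"
      using Cons.prems st_comm[of a y u] by simp
    also have "\<dots> = st (foldl st (st u y) ys) a"
      using Cons inj_st[OF iu] by simp
    finally show "foldl st u (a # y # ys) = foldl st u ((y # ys) @ [a])" by simp
  qed
qed

lemma heq_comm:
  assumes "\<forall>x\<in>set xs. \<forall>y\<in>set ys. x + 2 \<le> y \<or> y + 2 \<le> x"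
  shows "heq (xs @ ys) (ys @ xs)"
  using assms
proof (induction xs)
  case Nil then show ?case by (simp add: heq_refl)
next
  case (Cons x xs)
  have "heq (xs @ ys) (ys @ xs)" using Cons by auto
  then have "heq ([x] @ (xs @ ys)) ([x] @ (ys @ xs))"
    by (rule heq_app[OF heq_refl])
  then have "heq (x # xs @ ys) ([x] @ ys @ xs)" by simp
  moreover have "heq ((x # ys) @ xs) ((ys @ [x]) @ xs)"
    using Cons.prems by (intro heq_app[OF _ heq_refl] heq_comm1) simp
  then have "heq ([x] @ ys @ xs) ((ys @ [x]) @ xs)" by simp
  ultimately have "heq (x # xs @ ys) ((ys @ [x]) @ xs)" by (rule heq_trans)
  then show ?case by simp
qed

lemma braid_comp:
  "simple_transp b \<circ> (simple_transp (Suc b) \<circ> simple_transp b) =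
   simple_transp (Suc b) \<circ> (simple_transp b \<circ> simple_transp (Suc b))"
  by (auto simp: simple_transp_def fun_eq_iff)

lemma st_braid:
  assumes "inj u"
  shows "st (st (st u b) (Suc b)) b = st (st (st u (Suc b)) b) (Suc b)"
proof -
  have d: "u b \<noteq> u (Suc b)" "u b \<noteq> u (Suc (Suc b))" "u (Suc b) \<noteq> u (Suc (Suc b))"
    using assms by (simp_all add: inj_eq)
  have sv: "simple_transp b b = Suc b" "simple_transp b (Suc b) = b"
    "simple_transp b (Suc (Suc b)) = Suc (Suc b)"
    "simple_transp (Suc b) b = b" "simple_transp (Suc b) (Suc b) = Suc (Suc b)"
    "simple_transp (Suc b) (Suc (Suc b)) = Suc b"
    by (auto simp: simple_transp_def)
  show ?thesis using d
    by (cases "u b < u (Suc b)"; cases "u (Suc b) < u (Suc (Suc b))"; cases "u b < u (Suc (Suc b))")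
      (simp_all add: st_def sv comp_assoc braid_comp)
qed

lemma heq_braid: "heq [b, Suc b, b] [Suc b, b, Suc b]"
  by (simp add: heq_def st_braid)



lemma heq_ctx: "heq w1 w2 \<Longrightarrow> heq (p @ w1 @ q) (p @ w2 @ q)"
  by (intro heq_app heq_refl)

lemma run_step:
  assumes am: "a \<le> m"
    and IH: "heq (rev [a..<m] @ rev [a..<Suc m]) (rev [a..<Suc m] @ rev [Suc a..<Suc m])"
  shows "heq (rev [a..<Suc m] @ rev [a..<Suc (Suc m)])
             (rev [a..<Suc (Suc m)] @ rev [Suc a..<Suc (Suc m)])"
proof -
  define L where "L = rev [a..<m]"
  define T where "T = rev [Suc a..<Suc m]"
  have e1: "rev [a..<Suc m] = m # L" using am by (simp add: L_def)
  have e2: "rev [a..<Suc (Suc m)] = Suc m # m # L" using am by (simp add: L_def)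
  have e3: "rev [Suc a..<Suc (Suc m)] = Suc m # T" using am by (simp add: T_def)
  have Lb: "\<forall>x\<in>set L. x < m" by (simp add: L_def)
  have cm: "heq (L @ [Suc m]) ([Suc m] @ L)"
    using Lb by (intro heq_comm) auto
  have s1: "heq ([Suc m, m] @ (L @ [Suc m]) @ T) ([Suc m, m] @ ([Suc m] @ L) @ T)"
    by (rule heq_ctx[OF cm])
  have s2: "heq ([] @ [Suc m, m, Suc m] @ (L @ T)) ([] @ [m, Suc m, m] @ (L @ T))"
    by (rule heq_ctx) (simp add: heq_braid heq_sym)
  have IH': "heq (m # L @ T) (L @ (m # L))"
    using heq_sym[OF IH] e1 by (simp add: L_def T_def)
  have s3: "heq ([m, Suc m] @ (m # L @ T) @ []) ([m, Suc m] @ (L @ (m # L)) @ [])"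
    by (rule heq_ctx[OF IH'])
  have s4: "heq ([m] @ ([Suc m] @ L) @ (m # L)) ([m] @ (L @ [Suc m]) @ (m # L))"
    by (rule heq_ctx[OF heq_sym[OF cm]])
  have n1: "heq (Suc m # m # L @ Suc m # T) (Suc m # m # Suc m # L @ T)" using s1 by simp
  have n2: "heq (Suc m # m # Suc m # L @ T) (m # Suc m # m # L @ T)" using s2 by simp
  have n3: "heq (m # Suc m # m # L @ T) (m # Suc m # L @ m # L)" using s3 by simp
  have n4: "heq (m # Suc m # L @ m # L) (m # L @ Suc m # m # L)" using s4 by simp
  have "heq (Suc m # m # L @ Suc m # T) (m # L @ Suc m # m # L)"
    using heq_trans[OF heq_trans[OF heq_trans[OF n1 n2] n3] n4] .
  then show ?thesis unfolding e1 e2 e3 using heq_sym by simp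
qed

lemma run_id:
  "a \<le> m \<Longrightarrow> heq (rev [a..<m] @ rev [a..<Suc m]) (rev [a..<Suc m] @ rev [Suc a..<Suc m])"
proof (induction m)
  case 0 then show ?case by (simp add: heq_refl)
next
  case (Suc m)
  show ?case
  proof (cases "a = Suc m")
    case True then show ?thesis by (simp add: heq_refl)
  next
    case False
    then have "a \<le> m" using Suc.prems by simp
    then show ?thesis using run_step Suc.IH by blast
  qed
qed



lemma word_core:
  assumes j1: "1 \<le> j" and js: "j < s"
    and Q: "\<forall>q\<in>set WQ. a + j + 1 \<le> q"
    and Y: "\<forall>y\<in>set WY. a + 2 \<le> y"
  shows "heq (WP @ rev [a..<a+s-1] @ WQ @ rev [a+1..<a+j] @ WY)
             (WP @ rev [a+j..<a+s-1] @ rev [a..<a+j-1] @ WQ @ rev [a+1..<a+j] @ WY @ [a])"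
proof -
  define m where "m = a + j - 1"
  define H where "H = rev [a+j..<a+s-1]"
  define Lo where "Lo = rev [a..<m]"
  define T where "T = rev [Suc a..<Suc m]"
  have am: "a \<le> m" using j1 by (simp add: m_def)
  have eR: "rev [a..<a+s-1] = H @ (m # Lo)"
  proof -
    have "[a..<a+s-1] = [a..<Suc m] @ [a+j..<a+s-1]"
      using j1 js upt_add_eq_append[of a "Suc m" "s - 1 - j"] by (simp add: m_def)
    then show ?thesis using am by (simp add: H_def Lo_def)
  qed
  have eT: "rev [a+1..<a+j] = T" using j1 by (simp add: T_def m_def)
  have eLo: "rev [a..<a+j-1] = Lo" by (simp add: Lo_def m_def)
  have eH: "rev [a+j..<a+s-1] = H" by (simp add: H_def)
  have Ta: "T @ [a] = m # Lo"
  proof -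
    have "[a..<Suc m] = a # [Suc a..<Suc m]" using am upt_conv_Cons by simp
    then have "T @ [a] = rev [a..<Suc m]" by (simp add: T_def)
    then show ?thesis using am by (simp add: Lo_def)
  qed
  have Lob: "\<forall>x\<in>set Lo. x < m" by (simp add: Lo_def)
  have c1: "heq (WY @ [a]) ([a] @ WY)"
    using Y by (intro heq_comm) auto
  have c2: "heq (Lo @ WQ) (WQ @ Lo)"
  proof (intro heq_comm ballI)
    fix x y assume "x \<in> set Lo" "y \<in> set WQ"
    then have "x < m" "a + j + 1 \<le> y" using Q Lob by auto
    then show "x + 2 \<le> y \<or> y + 2 \<le> x" using j1 unfolding m_def by arith
  qed
  have c3: "heq (WQ @ (m # Lo)) ((m # Lo) @ WQ)"
  proof (intro heq_comm ballI)
    fix x y assume "y \<in> set (m # Lo)" "x \<in> set WQ"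
    then have "y \<le> m" "a + j + 1 \<le> x" using Q Lob by auto
    then show "x + 2 \<le> y \<or> y + 2 \<le> x" using j1 unfolding m_def by arith
  qed
  have e: "rev [a..<Suc m] = m # Lo" using am by (simp add: Lo_def)
  have r0: "heq (rev [a..<m] @ rev [a..<Suc m]) (rev [a..<Suc m] @ rev [Suc a..<Suc m])"
    by (rule run_id[OF am])
  have r: "heq (Lo @ (m # Lo)) ((m # Lo) @ T)"
    using r0 by (simp only: e Lo_def[symmetric] T_def[symmetric])
  have n1: "heq (WP @ H @ Lo @ WQ @ T @ WY @ [a]) (WP @ H @ Lo @ WQ @ T @ [a] @ WY)"
    using heq_ctx[OF c1, of "WP @ H @ Lo @ WQ @ T" "[]"] by simp
  have n2: "heq (WP @ H @ Lo @ WQ @ T @ [a] @ WY) (WP @ H @ WQ @ Lo @ T @ [a] @ WY)"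
    using heq_ctx[OF c2, of "WP @ H" "T @ [a] @ WY"] by simp
  have n3: "heq (WP @ H @ WQ @ Lo @ T @ [a] @ WY) (WP @ H @ WQ @ (m # Lo) @ T @ WY)"
  proof -
    have Ta': "T @ a # WY = m # Lo @ WY" using Ta by (metis append_Cons append_Nil append_assoc)
    show ?thesis using heq_ctx[OF r, of "WP @ H @ WQ" "WY"] by (simp add: Ta')
  qed
  have n4: "heq (WP @ H @ WQ @ (m # Lo) @ T @ WY) (WP @ H @ (m # Lo) @ WQ @ T @ WY)"
    using heq_ctx[OF c3, of "WP @ H" "T @ WY"] by simp
  have "heq (WP @ H @ Lo @ WQ @ T @ WY @ [a]) (WP @ H @ (m # Lo) @ WQ @ T @ WY)"
    using heq_trans[OF heq_trans[OF heq_trans[OF n1 n2] n3] n4] .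
  then show ?thesis unfolding eR eT eLo eH using heq_sym by simp
qed



definition kf :: "nat \<times> nat \<Rightarrow> nat \<times> int" where
  "kf = (\<lambda>(r, c). (r, - int c))"

lemma kf_simp[simp]: "kf (r, c) = (r, - int c)" by (simp add: kf_def)

lemma inj_kf: "inj kf" by (auto simp: inj_def kf_def)

lemma reading_list_props:
  assumes "finite D"
  shows "set (reading_list D) = D" "distinct (reading_list D)" "sorted (map kf (reading_list D))"
proof -
  have e: "reading_list D = sort_key kf (sorted_list_of_set D)"
    unfolding reading_list_def kf_def by simp
  show "set (reading_list D) = D" "distinct (reading_list D)" "sorted (map kf (reading_list D))"
    unfolding e using assms by auto
qed

lemma inj_on_kf: "inj_on kf A" by (rule inj_on_subset[OF inj_kf]) simp

lemma RL:
  assumes "finite D" "distinct xs" "sorted (map kf xs)" "set xs = D"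
  shows "reading_list D = xs"
proof -
  note p = reading_list_props[OF assms(1)]
  have "map kf (reading_list D) = map kf xs"
    apply (rule sorted_distinct_set_unique)
    using p assms by (auto simp: distinct_map inj_on_kf)
  then show ?thesis using inj_kf by (simp add: inj_map_eq_map)
qed

lemma row_sorted:
  "sorted_wrt (<) (cs :: nat list) \<Longrightarrow>
     sorted (map kf (map (Pair r) (rev cs))) \<and> distinct (map (Pair r) (rev cs))"
proof (induction cs)
  case Nil then show ?case by simp
next
  case (Cons c cs)
  then show ?case by (auto simp: sorted_append distinct_map)
qed

lemma map_letter_upt:
  "1 \<le> p \<Longrightarrow> map (\<lambda>c. r + c - 1) [p..<q] = [r+p-1..<r+q-1]"
proof (induction q)
  case 0 then show ?case by simp
next
  case (Suc q)
  show ?case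
  proof (cases "p \<le> q")
    case True
    have e: "r + Suc q - 1 = Suc (r + q - 1)" using Suc.prems True by simp
    have "r + p - 1 \<le> r + q - 1" using True by simp
    then have "[r+p-1..<r+Suc q-1] = [r+p-1..<r+q-1] @ [r+q-1]"
      unfolding e by (rule upt_Suc_append)
    then show ?thesis using Suc True by simp
  next
    case False then show ?thesis using Suc.prems by simp
  qed
qed



theorem mainTheorem3:
  fixes D :: "(nat \<times> nat) set" and i :: nat
  assumes "finite D"
    and "\<forall>(r, c) \<in> D. 1 \<le> r \<and> 1 \<le> c"
    and "1 \<le> i"
    and "pd_J D i \<noteq> {}"
  shows "demazure_prod D =
         demazure_step (demazure_prod (D - {(i, Min (pd_J D i))})) i"
proof -
  note fin = assms(1)
  have pos: "1 \<le> r \<and> 1 \<le> c" if "(r, c) \<in> D" for r c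
  proof -
    have "case (r, c) of (r, c) \<Rightarrow> 1 \<le> r \<and> 1 \<le> c" using assms(2) that by (rule bspec)
    then show ?thesis by simp
  qed
  define s where "s = pd_start D i"
  define j where "j = Min (pd_J D i)"
  have ex: "\<exists>c. 1 \<le> c \<and> (i, c) \<notin> D"
  proof -
    have fs: "finite (snd ` D)" by (rule finite_imageI[OF fin])
    define M where "M = Max (snd ` D)"
    have "(i, Suc M) \<notin> D"
    proof
      assume "(i, Suc M) \<in> D"
      then have "snd (i, Suc M) \<in> snd ` D" by (rule imageI)
      then have "Suc M \<in> snd ` D" by simp
      then have "Suc M \<le> Max (snd ` D)" by (rule Max_ge[OF fs])
      then show False unfolding M_def by simp
    qed
    then show ?thesis by (intro exI[of _ "Suc M"]) simp
  qed
  have s12: "1 \<le> s \<and> (i, s) \<notin> D"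
    unfolding s_def pd_start_def by (rule LeastI_ex[OF ex])
  then have s1: "1 \<le> s" and s2: "(i, s) \<notin> D" by simp_all
  have s3: "(i, c) \<in> D" if "1 \<le> c" "c < s" for c
  proof -
    have "\<not> (1 \<le> c \<and> (i, c) \<notin> D)"
      using not_less_Least[of c "\<lambda>c. 1 \<le> c \<and> (i, c) \<notin> D"] that(2)
      unfolding s_def pd_start_def by blast
    then show ?thesis using that(1) by simp
  qed
  have finJ: "finite (pd_J D i)" unfolding pd_J_def by (rule finite_subset[of _ "{..<pd_start D i}"]) (simp_all add: subset_iff)
  have jJ: "j \<in> pd_J D i" using Min_in[OF finJ assms(4)] j_def by simp
  then have j1: "1 \<le> j" and js: "j < s" and j2: "(Suc i, j) \<notin> D"
    unfolding pd_J_def s_def by simp_all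
  have j3: "(Suc i, c) \<in> D" if "1 \<le> c" "c < j" for c
  proof (rule ccontr)
    assume "(Suc i, c) \<notin> D"
    then have "c \<in> pd_J D i" using that js unfolding pd_J_def s_def by simp
    then have "j \<le> c" using Min_le[OF finJ] j_def by simp
    then show False using that by simp
  qed
  define DP where "DP = {p\<in>D. fst p < i \<or> (fst p = i \<and> s < snd p)}"
  define DQ where "DQ = {p\<in>D. fst p = Suc i \<and> j < snd p}"
  define DY where "DY = {p\<in>D. Suc (Suc i) \<le> fst p}"
  define LP where "LP = reading_list DP"
  define LQ where "LQ = reading_list DQ"
  define LY where "LY = reading_list DY"
  define LR where "LR = map (Pair i) (rev [1..<s])"
  define LR' where "LR' = map (Pair i) (rev ([1..<j] @ [Suc j..<s]))"
  define LT where "LT = map (Pair (Suc i)) (rev [1..<j])"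
  have fP: "finite DP" "finite DQ" "finite DY" using fin by (auto simp: DP_def DQ_def DY_def)
  note pP = reading_list_props[OF fP(1)] and pQ = reading_list_props[OF fP(2)]
    and pY = reading_list_props[OF fP(3)]
  have rR: "sorted (map kf LR) \<and> distinct LR" unfolding LR_def by (rule row_sorted) simp
  have rR': "sorted (map kf LR') \<and> distinct LR'" unfolding LR'_def
    by (rule row_sorted) (auto simp: sorted_wrt_append)
  have rT: "sorted (map kf LT) \<and> distinct LT" unfolding LT_def by (rule row_sorted) simp
  have setR: "set LR = {(i, c) | c. 1 \<le> c \<and> c < s}" by (auto simp: LR_def)
  have setR': "set LR' = {(i, c) | c. 1 \<le> c \<and> c < s \<and> c \<noteq> j}"
  proof -
    have e1: "set LR' = Pair i ` ({1..<j} \<union> {Suc j..<s})" by (auto simp: LR'_def)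
    have e2: "{1..<j} \<union> {Suc j..<s} = {c. 1 \<le> c \<and> c < s \<and> c \<noteq> j}" using js by auto
    show ?thesis unfolding e1 e2 by blast
  qed
  have setT: "set LT = {(Suc i, c) | c. 1 \<le> c \<and> c < j}" by (auto simp: LT_def)
  have main1: "reading_list D = LP @ LR @ LQ @ LT @ LY"
  proof (rule RL[OF fin])
    show "distinct (LP @ LR @ LQ @ LT @ LY)"
      using pP pQ pY rR rT setR setT unfolding LP_def LQ_def LY_def
      by (auto simp: DP_def DQ_def DY_def)
    show "sorted (map kf (LP @ LR @ LQ @ LT @ LY))"
      using pP pQ pY rR rT setR setT unfolding LP_def LQ_def LY_def
      by (auto simp: sorted_append DP_def DQ_def DY_def)
    show "set (LP @ LR @ LQ @ LT @ LY) = D"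
    proof
      show "set (LP @ LR @ LQ @ LT @ LY) \<subseteq> D"
        using pP pQ pY setR setT s3 j3 unfolding LP_def LQ_def LY_def
        by (auto simp: DP_def DQ_def DY_def)
      show "D \<subseteq> set (LP @ LR @ LQ @ LT @ LY)"
      proof
        fix p assume pD: "p \<in> D"
        obtain r c where p: "p = (r, c)" by fastforce
        have rc: "1 \<le> r" "1 \<le> c" using pos pD p by auto
        show "p \<in> set (LP @ LR @ LQ @ LT @ LY)"
          using pP pQ pY setR setT pD p rc s2 j2 unfolding LP_def LQ_def LY_def
          by (cases "r < i \<or> r = i \<or> r = Suc i") (auto simp: DP_def DQ_def DY_def not_less_eq_eq)
      qed
    qed
  qed
  have fin': "finite (D - {(i, j)})" using fin by simp
  have main2: "reading_list (D - {(i, j)}) = LP @ LR' @ LQ @ LT @ LY"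
  proof (rule RL[OF fin'])
    show "distinct (LP @ LR' @ LQ @ LT @ LY)"
      using pP pQ pY rR' rT setR' setT unfolding LP_def LQ_def LY_def
      by (auto simp: DP_def DQ_def DY_def)
    show "sorted (map kf (LP @ LR' @ LQ @ LT @ LY))"
      using pP pQ pY rR' rT setR' setT unfolding LP_def LQ_def LY_def
      by (auto simp: sorted_append DP_def DQ_def DY_def)
    show "set (LP @ LR' @ LQ @ LT @ LY) = D - {(i, j)}"
    proof
      show "set (LP @ LR' @ LQ @ LT @ LY) \<subseteq> D - {(i, j)}"
        using pP pQ pY setR' setT s3 j3 js unfolding LP_def LQ_def LY_def
        by (auto simp: DP_def DQ_def DY_def)
      show "D - {(i, j)} \<subseteq> set (LP @ LR' @ LQ @ LT @ LY)"
      proof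
        fix p assume pD: "p \<in> D - {(i, j)}"
        obtain r c where p: "p = (r, c)" by fastforce
        have rc: "1 \<le> r" "1 \<le> c" using pos pD p by auto
        show "p \<in> set (LP @ LR' @ LQ @ LT @ LY)"
          using pP pQ pY setR' setT pD p rc s2 j2 unfolding LP_def LQ_def LY_def
          by (cases "r < i \<or> r = i \<or> r = Suc i") (auto simp: DP_def DQ_def DY_def not_less_eq_eq)
      qed
    qed
  qed
  define lt where "lt = (\<lambda>(r::nat, c::nat). r + c - 1)"
  have rw: "reading_word X = map lt (reading_list X)" for X
    unfolding reading_word_def lt_def by simp
  define WP where "WP = map lt LP"
  define WQ where "WQ = map lt LQ"
  define WY where "WY = map lt LY"
  have wR: "map lt LR = rev [i..<i+s-1]"
    using map_letter_upt[of 1 i s] by (simp add: LR_def lt_def rev_map[symmetric] comp_def)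
  have wT: "map lt LT = rev [i+1..<i+j]"
    using map_letter_upt[of 1 "Suc i" j] by (simp add: LT_def lt_def rev_map[symmetric] comp_def)
  have wR': "map lt LR' = rev [i+j..<i+s-1] @ rev [i..<i+j-1]"
    using map_letter_upt[of 1 i j] map_letter_upt[of "Suc j" i s]
    by (simp add: LR'_def lt_def rev_map[symmetric] comp_def)
  have W1: "reading_word D = WP @ rev [i..<i+s-1] @ WQ @ rev [i+1..<i+j] @ WY"
    unfolding rw main1 WP_def WQ_def WY_def using wR wT by simp
  have W2: "reading_word (D - {(i, j)}) =
      WP @ rev [i+j..<i+s-1] @ rev [i..<i+j-1] @ WQ @ rev [i+1..<i+j] @ WY"
    unfolding rw main2 WP_def WQ_def WY_def using wR' wT by simp
  have Qb: "\<forall>q\<in>set WQ. i + j + 1 \<le> q"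
    using pQ unfolding WQ_def LQ_def by (auto simp: DQ_def lt_def)
  have Yb: "\<forall>y\<in>set WY. i + 2 \<le> y"
    using pY pos unfolding WY_def LY_def by (fastforce simp: DY_def lt_def)
  have H: "heq (reading_word D) (reading_word (D - {(i, j)}) @ [i])"
    unfolding W1 W2 using word_core[OF j1 js Qb Yb, of WP] by simp
  have L1: "\<forall>a\<in>set (reading_word X). 1 \<le> a" if "X \<subseteq> D" for X
  proof -
    have "finite X" using fin that finite_subset by blast
    then show ?thesis using reading_list_props[of X] that pos unfolding rw lt_def by fastforce
  qed
  have "demazure_prod D = foldl st id (reading_word D)"
    unfolding demazure_prod_def using foldl_dstep[OF finperm_id] L1[of D] by simp
  also have "\<dots> = foldl st id (reading_word (D - {(i, j)}) @ [i])"
    using H unfolding heq_def by simp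
  also have "\<dots> = st (demazure_prod (D - {(i, j)})) i"
    unfolding demazure_prod_def using foldl_dstep[OF finperm_id] L1[of "D - {(i,j)}"] by simp
  also have "\<dots> = demazure_step (demazure_prod (D - {(i, j)})) i"
    unfolding demazure_prod_def
    using dstep_st[OF finperm_foldl[OF finperm_id] assms(3)] foldl_dstep[OF finperm_id] L1[of "D - {(i,j)}"]
    by simp
  finally show ?thesis unfolding j_def .
qed

end
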